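(* A pointed connected graph $(g,v_0)\in\mathscr G_c^\bullet[U]$ is a prime structure of the set operad $\mathscr G_c^\bullet$ if and only if the graph $g$ is nonseparable, i.e. has no cutpoint.
   Context: $\mathscr G_c^\bullet[U]$ is the set of pairs $(g,v)$, where $g$ is a simple connected graph on vertex set $U$ and $v\in U$. It is a set operad with the following product. For an assembly $\{(g_B,v_B)\}_{B\in\pi}$ and an outer structure $(g'_\pi,B_0)$ (a connected graph on $\pi$ with distinguished block $B_0$), the product is $(g,v_{B_0})$. Here $g$ has all edges of the $g_B$, plus the edge $\{v_B,v_{B'}\}$ for each edge $\{B,B'\}$ of $g'_\pi$. A structure $m\in M[U]$ of a set operad $(M,\eta)$ is prime if whenever $m=\eta(a,m')$ then either $a$ is the assembly of singleton structures (and $m'$ is isomorphic to $m$), or $a=\{m\}$ (and $m'$ is the singleton structure on $\{U\}$). A cutpoint of a connected graph $g$ is a vertex whose deletion disconnects $g$. *)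

theory Defs
  imports Main "HOL-Library.Disjoint_Sets"
begin

definition simple_graph :: "'a set \<Rightarrow> 'a set set \<Rightarrow> bool" where
  "simple_graph U E \<longleftrightarrow> (\<forall>e\<in>E. \<exists>x y. x \<in> U \<and> y \<in> U \<and> x \<noteq> y \<and> e = {x, y})"

definition adj :: "'a set set \<Rightarrow> ('a \<times> 'a) set" where
  "adj E = {(x, y). {x, y} \<in> E}"

definition reach :: "'a set set \<Rightarrow> 'a \<Rightarrow> 'a \<Rightarrow> bool" where
  "reach E x y \<longleftrightarrow> (x, y) \<in> (adj E)\<^sup>*"

definition connected_graph :: "'a set \<Rightarrow> 'a set set \<Rightarrow> bool" where
  "connected_graph U E \<longleftrightarrow> simple_graph U E \<and> (\<forall>x\<in>U. \<forall>y\<in>U. reach E x y)"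

definition Gc_pt :: "'a set \<Rightarrow> 'a set set \<times> 'a \<Rightarrow> bool" where
  "Gc_pt U m \<longleftrightarrow> finite U \<and> connected_graph U (fst m) \<and> snd m \<in> U"

definition Gc_prod :: "'a set set \<Rightarrow> ('a set \<Rightarrow> 'a set set \<times> 'a)
    \<Rightarrow> 'a set set set \<times> 'a set \<Rightarrow> 'a set set \<times> 'a" where
  "Gc_prod \<pi> a m' =
     ((\<Union>B\<in>\<pi>. fst (a B)) \<union> {{snd (a B), snd (a B')} | B B'. {B, B'} \<in> fst m'},
      snd (a (snd m')))"

definition Gc_prime :: "'a set \<Rightarrow> 'a set set \<times> 'a \<Rightarrow> bool" where
  "Gc_prime U m \<longleftrightarrow>
     (\<forall>\<pi> a m'. partition_on U \<pi> \<and> (\<forall>B\<in>\<pi>. Gc_pt B (a B)) \<and> Gc_pt \<pi> m'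
        \<and> m = Gc_prod \<pi> a m' \<longrightarrow> \<pi> = {{x} | x. x \<in> U} \<or> \<pi> = {U})"

definition cutpoint :: "'a set \<Rightarrow> 'a set set \<Rightarrow> 'a \<Rightarrow> bool" where
  "cutpoint U E c \<longleftrightarrow> c \<in> U \<and>
     (\<exists>x\<in>U - {c}. \<exists>y\<in>U - {c}. \<not> reach {e\<in>E. c \<notin> e} x y)"

end

theory Submission
  imports Defs
begin

lemma reach_refl[simp]: "reach E x x" by (simp add: reach_def)
lemma reach_edge: "{x,y} \<in> E \<Longrightarrow> reach E x y"
  by (auto simp: reach_def adj_def)
lemma reach_trans: "reach E x y \<Longrightarrow> reach E y z \<Longrightarrow> reach E x z"
  by (auto simp: reach_def)
lemma reach_sym: assumes "reach E x y" shows "reach E y x"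
proof -
  have "(x,y) \<in> (adj E)\<^sup>*" using assms by (simp add: reach_def)
  then show ?thesis
  proof (induction rule: rtrancl_induct)
    case base then show ?case by simp
  next
    case (step y z)
    then have "{z,y} \<in> E" by (auto simp: adj_def insert_commute)
    then have "reach E z y" by (rule reach_edge)
    then show ?case using step.IH by (rule reach_trans)
  qed
qed
lemma reach_mono: assumes "E \<subseteq> E'" "reach E x y" shows "reach E' x y"
proof -
  have "adj E \<subseteq> adj E'" using assms(1) by (auto simp: adj_def)
  then show ?thesis using assms(2) rtrancl_mono unfolding reach_def by blast
qed
lemma reach_closed:
  assumes cl: "\<forall>p q. {p,q}\<in>E \<longrightarrow> p\<in>S \<longrightarrow> q\<in>S" and "x\<in>S" and "reach E x y"
  shows "y\<in>S \<and> reach {e\<in>E. e\<subseteq>S} x y"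
proof -
  have "(x,y) \<in> (adj E)\<^sup>*" using assms by (simp add: reach_def)
  then show ?thesis
  proof (induction rule: rtrancl_induct)
    case base then show ?case using \<open>x\<in>S\<close> by simp
  next
    case (step y z)
    then have e: "{y,z} \<in> E" by (auto simp: adj_def)
    with step cl have "z \<in> S" by blast
    with e step have "{y,z} \<in> {e\<in>E. e\<subseteq>S}" by auto
    then have "reach {e\<in>E. e\<subseteq>S} y z" by (rule reach_edge)
    moreover have "reach {e\<in>E. e\<subseteq>S} x y" using step.IH by (rule conjunct2)
    ultimately have "reach {e\<in>E. e\<subseteq>S} x z" by (rule reach_trans[rotated])
    then show ?case using \<open>z\<in>S\<close> by simp
  qed
qed
lemma reach_exit:
  assumes "reach E x y" "x\<in>S" "y\<notin>S"
  shows "\<exists>p q. {p,q}\<in>E \<and> p\<in>S \<and> q\<notin>S"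
  using reach_closed[of E S x y] assms by blast
lemma reach_map:
  assumes m: "\<forall>p q. {p,q}\<in>E \<longrightarrow> f p = f q \<or> {f p, f q} \<in> E'" and "reach E x y"
  shows "reach E' (f x) (f y)"
proof -
  have "(x,y) \<in> (adj E)\<^sup>*" using assms by (simp add: reach_def)
  then show ?thesis
  proof (induction rule: rtrancl_induct)
    case base then show ?case by simp
  next
    case (step y z)
    then have e: "{y,z} \<in> E" by (auto simp: adj_def)
    then have "f y = f z \<or> {f y, f z} \<in> E'" using m by blast
    then have "reach E' (f y) (f z)" using reach_edge by auto
    then show ?case using step.IH by (rule reach_trans[rotated])
  qed
qed
lemma reach_not_to:
  assumes "reach {e\<in>E. c\<notin>e} z c" shows "z = c"
proof -
  have "(z,c) \<in> (adj {e\<in>E. c\<notin>e})\<^sup>*" using assms by (simp add: reach_def)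
  then show ?thesis
  proof (cases rule: rtranclE)
    case (step y) then show ?thesis by (auto simp: adj_def)
  qed simp
qed


lemma part_uniq: "partition_on U \<pi> \<Longrightarrow> B1\<in>\<pi> \<Longrightarrow> B2\<in>\<pi> \<Longrightarrow> p\<in>B1 \<Longrightarrow> p\<in>B2 \<Longrightarrow> B1 = B2"
  unfolding partition_on_def disjoint_def by blast

lemma simple_mem: "simple_graph U E \<Longrightarrow> {p,q} \<in> E \<Longrightarrow> p \<in> U \<and> q \<in> U \<and> p \<noteq> q"
  unfolding simple_graph_def by (metis doubleton_eq_iff)

lemma dirB:
  assumes pt: "Gc_pt U (g, v0)" and nc: "\<not> (\<exists>c. cutpoint U g c)"
  shows "Gc_prime U (g, v0)"
  unfolding Gc_prime_def
proof (intro allI impI)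
  fix \<pi> a m'
  assume H: "partition_on U \<pi> \<and> (\<forall>B\<in>\<pi>. Gc_pt B (a B)) \<and> Gc_pt \<pi> m' \<and> (g, v0) = Gc_prod \<pi> a m'"
  then have P: "partition_on U \<pi>" and A: "\<And>B. B\<in>\<pi> \<Longrightarrow> Gc_pt B (a B)" and M: "Gc_pt \<pi> m'"
    and G: "g = (\<Union>B\<in>\<pi>. fst (a B)) \<union> {{snd (a B), snd (a B')} | B B'. {B, B'} \<in> fst m'}"
    by (auto simp: Gc_prod_def)
  have sa: "\<And>B. B\<in>\<pi> \<Longrightarrow> snd (a B) \<in> B" using A by (simp add: Gc_pt_def)
  have ne: "{} \<notin> \<pi>" using P partition_onD3 by blast
  have UU: "U = \<Union>\<pi>" using P partition_onD1 by blast
  show "\<pi> = {{x} |x. x \<in> U} \<or> \<pi> = {U}"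
  proof (rule ccontr)
    assume nt: "\<not> (\<pi> = {{x} |x. x \<in> U} \<or> \<pi> = {U})"
    have "\<exists>B\<in>\<pi>. \<exists>x\<in>B. x \<noteq> snd (a B)"
    proof (rule ccontr)
      assume "\<not> ?thesis"
      then have sing: "\<And>B. B\<in>\<pi> \<Longrightarrow> B = {snd (a B)}" using sa by blast
      have "\<pi> = {{x} |x. x \<in> U}"
      proof
        show "\<pi> \<subseteq> {{x} |x. x \<in> U}" using sing sa UU by blast
        show "{{x} |x. x \<in> U} \<subseteq> \<pi>"
        proof
          fix X assume "X \<in> {{x} |x. x \<in> U}"
          then obtain x where "X = {x}" "x \<in> U" by blast
          then obtain B where "B\<in>\<pi>" "x\<in>B" using UU by blast
          then show "X \<in> \<pi>" using sing \<open>X={x}\<close> by (metis singletonD)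
        qed
      qed
      then show False using nt by blast
    qed
    then obtain B x where B: "B\<in>\<pi>" "x\<in>B" "x \<noteq> snd (a B)" by blast
    define c where "c = snd (a B)"
    have "\<exists>B'\<in>\<pi>. B' \<noteq> B"
    proof (rule ccontr)
      assume "\<not> ?thesis"
      then have "\<pi> = {B}" using B by blast
      then have "\<pi> = {U}" using UU by simp
      then show False using nt by blast
    qed
    then obtain B' where B': "B'\<in>\<pi>" "B'\<noteq>B" by blast
    then obtain y where y: "y \<in> B'" using ne by (metis all_not_in_conv)
    have yB: "y \<notin> B" using part_uniq[OF P] B B' y by metis
    have cB: "c \<in> B" using sa B c_def by simp
    let ?E = "{e\<in>g. c\<notin>e}"
    have cl: "\<forall>p q. {p,q}\<in>?E \<longrightarrow> p\<in>B \<longrightarrow> q\<in>B"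
    proof (intro allI impI)
      fix p q assume e: "{p,q}\<in>?E" and pB: "p\<in>B"
      then have pc: "p \<noteq> c" "q \<noteq> c" by auto
      from e have "{p,q} \<in> g" by simp
      then consider (i) B2 where "B2\<in>\<pi>" "{p,q} \<in> fst (a B2)"
        | (ii) B1 B2 where "{B1,B2} \<in> fst m'" "{p,q} = {snd (a B1), snd (a B2)}"
        using G by blast
      then show "q\<in>B"
      proof cases
        case i
        then have "simple_graph B2 (fst (a B2))" using A by (simp add: Gc_pt_def connected_graph_def)
        then have "p\<in>B2" "q\<in>B2" using simple_mem i by metis+
        then show ?thesis using part_uniq[OF P] i B pB by metis
      next
        case ii
        have "simple_graph \<pi> (fst m')" using M by (simp add: Gc_pt_def connected_graph_def)
        then have Bs: "B1\<in>\<pi>" "B2\<in>\<pi>" using simple_mem ii by metis+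
        have "p = snd (a B1) \<or> p = snd (a B2)" using ii by (metis doubleton_eq_iff insertI1 insertE singletonD)
        then show ?thesis
        proof
          assume "p = snd (a B1)"
          then have "B1 = B" using part_uniq[OF P] Bs sa pB B by metis
          then show ?thesis using pc c_def \<open>p = snd (a B1)\<close> by simp
        next
          assume "p = snd (a B2)"
          then have "B2 = B" using part_uniq[OF P] Bs sa pB B by metis
          then show ?thesis using pc c_def \<open>p = snd (a B2)\<close> by simp
        qed
      qed
    qed
    have "\<not> reach ?E x y" using reach_closed[OF cl, of x y] B yB by blast
    moreover have "x \<in> U - {c}" "y \<in> U - {c}" "c \<in> U" using B B' y yB cB UU c_def by auto
    ultimately have "cutpoint U g c" unfolding cutpoint_def by blast
    then show False using nc by blast
  qed
qed


lemma dirA: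
  assumes pt: "Gc_pt U (g, v0)" and cp: "cutpoint U g c"
  shows "\<not> Gc_prime U (g, v0)"
proof -
  have fin: "finite U" and cg: "connected_graph U g" and v0U: "v0 \<in> U" using pt by (auto simp: Gc_pt_def)
  have sg: "simple_graph U g" using cg by (simp add: connected_graph_def)
  have rg: "\<And>p q. p\<in>U \<Longrightarrow> q\<in>U \<Longrightarrow> reach g p q" using cg by (simp add: connected_graph_def)
  let ?E = "{e\<in>g. c\<notin>e}"
  obtain x y where cU: "c\<in>U" and xy: "x\<in>U-{c}" "y\<in>U-{c}" "\<not> reach ?E x y"
    using cp unfolding cutpoint_def by blast
  obtain z w where zw: "z\<in>U-{c}" "w\<in>U-{c}" "\<not> reach ?E z w" "\<not> reach ?E z v0"
  proof (cases "reach ?E x v0")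
    case True
    have "\<not> reach ?E y v0"
    proof
      assume "reach ?E y v0"
      then have "reach ?E v0 y" by (rule reach_sym)
      with True have "reach ?E x y" by (rule reach_trans)
      with xy(3) show False by simp
    qed
    moreover have "\<not> reach ?E y x"
    proof
      assume "reach ?E y x"
      then have "reach ?E x y" by (rule reach_sym)
      with xy(3) show False by simp
    qed
    ultimately show ?thesis using that[of y x] xy(1,2) by blast
  next
    case False then show ?thesis using that xy by blast
  qed
  define C where "C = {u\<in>U. reach ?E z u}"
  define B where "B = insert c C"
  have zC: "z \<in> C" using zw C_def by simp
  have cC: "c \<notin> C"
  proof
    assume "c \<in> C"
    then have "reach ?E z c" using C_def by simp
    then have "z = c" by (rule reach_not_to)
    then show False using zw(1) by simp
  qed
  have wB: "w \<notin> B" using zw C_def B_def by auto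
  have v0C: "v0 \<notin> C" using zw C_def by auto
  have BU: "B \<subseteq> U" using cU C_def B_def by auto
  have clC: "\<forall>p q. {p,q}\<in>?E \<longrightarrow> p\<in>C \<longrightarrow> q\<in>C"
  proof (intro allI impI)
    fix p q assume "{p,q}\<in>?E" "p\<in>C"
    then have e: "{p,q}\<in>g" "c \<notin> {p,q}" and r: "reach ?E z p" unfolding C_def by auto
    have "reach ?E p q" using e by (intro reach_edge) simp
    with r have "reach ?E z q" by (rule reach_trans)
    moreover have "q \<in> U" using simple_mem[OF sg e(1)] by simp
    ultimately show "q\<in>C" unfolding C_def by simp
  qed
  have key: "\<And>p q. {p,q}\<in>g \<Longrightarrow> p\<in>B \<Longrightarrow> q\<notin>B \<Longrightarrow> p = c"
  proof -
    fix p q assume e: "{p,q}\<in>g" "p\<in>B" "q\<notin>B"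
    show "p = c"
    proof (rule ccontr)
      assume "p \<noteq> c"
      then have "p \<in> C" using e B_def by simp
      moreover have "q \<noteq> c" using e B_def by auto
      ultimately have "q \<in> C" using clC e \<open>p\<noteq>c\<close> by blast
      then show False using e B_def by simp
    qed
  qed
  define gB where "gB = {e\<in>g. e\<subseteq>B}"
  have rB: "\<And>u. u\<in>B \<Longrightarrow> reach gB z u"
  proof -
    have rC: "\<And>u. u\<in>C \<Longrightarrow> reach gB z u"
    proof -
      fix u assume "u\<in>C"
      then have "reach ?E z u" using C_def by simp
      then have "reach {e\<in>?E. e\<subseteq>C} z u" using reach_closed[OF clC] zC by blast
      then show "reach gB z u" by (rule reach_mono[rotated]) (auto simp: gB_def B_def)
    qed
    obtain p q where pq: "{p,q}\<in>g" "p\<in>C" "q\<notin>C"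
    proof -
      have "z \<in> U" "w \<in> U" using zw by auto
      then have "reach g z w" by (rule rg)
      moreover have "w \<notin> C" using zw(3) unfolding C_def by simp
      ultimately have "\<exists>p q. {p,q}\<in>g \<and> p\<in>C \<and> q\<notin>C" using zC by (intro reach_exit)
      then show ?thesis using that by blast
    qed
    have "q = c"
    proof (rule ccontr)
      assume "q\<noteq>c"
      then have "{p,q}\<in>?E" using pq cC by auto
      then have "q \<in> C" using clC pq(2) by blast
      then show False using pq(3) by simp
    qed
    then have "{p,c} \<in> gB" using pq gB_def B_def by auto
    then have "reach gB p c" by (rule reach_edge)
    with rC[OF pq(2)] have "reach gB z c" by (rule reach_trans)
    then show "\<And>u. u\<in>B \<Longrightarrow> reach gB z u" using rC B_def by auto
  qed
  define blk where "blk p = (if p\<in>B then B else {p})" for p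
  define \<pi> where "\<pi> = blk ` U"
  define a where "a X = (if X = B then (gB, c) else ({}, SOME p. p\<in>X))" for X
  define g' where "g' = {{blk p, blk q} | p q. {p,q}\<in>g \<and> blk p \<noteq> blk q}"
  define m' where "m' = (g', blk v0)"
  have Bnsing: "\<And>u. B \<noteq> {u}" using zC cC B_def by auto
  have sab: "\<And>p. snd (a (blk p)) = (if p\<in>B then c else p)"
    using Bnsing by (auto simp: a_def blk_def)
  have Bpi: "B \<in> \<pi>" using cU B_def unfolding \<pi>_def blk_def by force
  have P: "partition_on U \<pi>"
  proof (rule partition_onI)
    show "\<Union>\<pi> = U" using BU unfolding \<pi>_def blk_def by auto
    show "{} \<notin> \<pi>" unfolding \<pi>_def blk_def B_def by auto
    show "\<And>p q. p \<in> \<pi> \<Longrightarrow> q \<in> \<pi> \<Longrightarrow> p \<noteq> q \<Longrightarrow> disjnt p q"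
      unfolding \<pi>_def blk_def disjnt_def by auto
  qed
  have A: "\<forall>X\<in>\<pi>. Gc_pt X (a X)"
  proof
    fix X assume "X\<in>\<pi>"
    then obtain p where p: "p\<in>U" "X = blk p" unfolding \<pi>_def by blast
    show "Gc_pt X (a X)"
    proof (cases "p\<in>B")
      case True
      then have X: "X = B" using p blk_def by simp
      have "simple_graph B gB"
        unfolding simple_graph_def
      proof
        fix e assume "e \<in> gB"
        then have e: "e \<in> g" "e \<subseteq> B" unfolding gB_def by auto
        then obtain x y where "x \<in> U" "y \<in> U" "x \<noteq> y" "e = {x,y}" using sg unfolding simple_graph_def by blast
        then show "\<exists>x y. x \<in> B \<and> y \<in> B \<and> x \<noteq> y \<and> e = {x, y}" using e(2) by blast
      qed
      moreover have "\<forall>u\<in>B. \<forall>v\<in>B. reach gB u v"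
      proof (intro ballI)
        fix u v assume "u\<in>B" "v\<in>B"
        then show "reach gB u v" using reach_trans[OF reach_sym[OF rB[of u]] rB[of v]] by simp
      qed
      moreover have "finite B" using fin BU finite_subset by blast
      moreover have "a X = (gB, c)" using X a_def by simp
      moreover have "c \<in> B" using B_def by simp
      ultimately show ?thesis using X by (simp add: Gc_pt_def connected_graph_def)
    next
      case False
      then have X: "X = {p}" using p blk_def by simp
      then have "a X = ({}, p)" using Bnsing a_def by auto
      then show ?thesis using X by (simp add: Gc_pt_def connected_graph_def simple_graph_def)
    qed
  qed
  have blkpi: "\<And>p. p\<in>U \<Longrightarrow> blk p \<in> \<pi>" unfolding \<pi>_def by blast
  have M: "Gc_pt \<pi> m'"
  proof -
    have "simple_graph \<pi> g'" unfolding simple_graph_def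
    proof
      fix e assume "e \<in> g'"
      then obtain p q where e: "e = {blk p, blk q}" "{p,q}\<in>g" "blk p \<noteq> blk q" unfolding g'_def by blast
      then have "p \<in> U" "q \<in> U" using simple_mem[OF sg e(2)] by auto
      then show "\<exists>x y. x \<in> \<pi> \<and> y \<in> \<pi> \<and> x \<noteq> y \<and> e = {x, y}" using e blkpi by blast
    qed
    moreover have "\<forall>X\<in>\<pi>. \<forall>Y\<in>\<pi>. reach g' X Y"
    proof (intro ballI)
      fix X Y assume "X\<in>\<pi>" "Y\<in>\<pi>"
      then obtain p q where pq: "p\<in>U" "q\<in>U" "X = blk p" "Y = blk q" unfolding \<pi>_def by blast
      have mm: "\<forall>p q. {p,q}\<in>g \<longrightarrow> blk p = blk q \<or> {blk p, blk q} \<in> g'"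
        unfolding g'_def by blast
      have "reach g p q" using pq(1,2) by (rule rg)
      then have "reach g' (blk p) (blk q)" by (rule reach_map[OF mm])
      then show "reach g' X Y" using pq by simp
    qed
    ultimately show ?thesis using fin blkpi v0U unfolding m'_def \<pi>_def Gc_pt_def connected_graph_def by auto
  qed
  have U1: "(\<Union>X\<in>\<pi>. fst (a X)) = gB"
  proof
    show "(\<Union>X\<in>\<pi>. fst (a X)) \<subseteq> gB" unfolding a_def by (auto split: if_splits)
    show "gB \<subseteq> (\<Union>X\<in>\<pi>. fst (a X))"
    proof
      fix e assume "e \<in> gB"
      then have "e \<in> fst (a B)" by (simp add: a_def)
      with Bpi show "e \<in> (\<Union>X\<in>\<pi>. fst (a X))" by blast
    qed
  qed
  have sae: "\<And>p q. {p,q} \<in> g \<Longrightarrow> \<not> (p\<in>B \<and> q\<in>B) \<Longrightarrow> {snd (a (blk p)), snd (a (blk q))} = {p,q}"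
  proof -
    fix p q assume e: "{p,q} \<in> g" and nb: "\<not> (p\<in>B \<and> q\<in>B)"
    have e': "{q,p} \<in> g" using e by (simp add: insert_commute)
    show "{snd (a (blk p)), snd (a (blk q))} = {p,q}"
    proof (cases "p\<in>B")
      case True
      then have "q \<notin> B" using nb by simp
      then have "p = c" using key[OF e True] by simp
      then show ?thesis using sab True \<open>q\<notin>B\<close> by simp
    next
      case False
      show ?thesis
      proof (cases "q\<in>B")
        case True
        then have "q = c" using key[OF e' True False] by simp
        then show ?thesis using sab True False by simp
      next
        case F2: False
        then show ?thesis using sab False by simp
      qed
    qed
  qed
  have edges: "g = (\<Union>X\<in>\<pi>. fst (a X)) \<union> {{snd (a X), snd (a Y)} | X Y. {X, Y} \<in> fst m'}"
  proof
    show "g \<subseteq> (\<Union>X\<in>\<pi>. fst (a X)) \<union> {{snd (a X), snd (a Y)} | X Y. {X, Y} \<in> fst m'}"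
    proof
      fix e assume e: "e \<in> g"
      then obtain p q where pq: "e = {p,q}" "p\<noteq>q" using sg unfolding simple_graph_def by blast
      show "e \<in> (\<Union>X\<in>\<pi>. fst (a X)) \<union> {{snd (a X), snd (a Y)} | X Y. {X, Y} \<in> fst m'}"
      proof (cases "p\<in>B \<and> q\<in>B")
        case True
        then have "e \<in> gB" using e pq gB_def by auto
        then show ?thesis using U1 by blast
      next
        case False
        then have ne: "blk p \<noteq> blk q" using pq Bnsing unfolding blk_def by auto
        have epq: "{p,q} \<in> g" using e pq by simp
        then have "{blk p, blk q} \<in> g'" using ne unfolding g'_def by blast
        then have "{blk p, blk q} \<in> fst m'" unfolding m'_def by simp
        moreover have "e = {snd (a (blk p)), snd (a (blk q))}" using sae[OF epq False] pq by simp
        ultimately show ?thesis by blast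
      qed
    qed
    show "(\<Union>X\<in>\<pi>. fst (a X)) \<union> {{snd (a X), snd (a Y)} | X Y. {X, Y} \<in> fst m'} \<subseteq> g"
    proof
      fix e assume "e \<in> (\<Union>X\<in>\<pi>. fst (a X)) \<union> {{snd (a X), snd (a Y)} | X Y. {X, Y} \<in> fst m'}"
      then consider "e \<in> gB" | X Y where "e = {snd (a X), snd (a Y)}" "{X, Y} \<in> g'"
        using U1 unfolding m'_def by auto
      then show "e \<in> g"
      proof cases
        case 1 then show ?thesis using gB_def by simp
      next
        case 2
        have "\<exists>p q. {X,Y} = {blk p, blk q} \<and> {p,q}\<in>g \<and> blk p \<noteq> blk q"
          using 2(2) unfolding g'_def mem_Collect_eq .
        then obtain p q where pqc: "{X,Y} = {blk p, blk q} \<and> {p,q}\<in>g \<and> blk p \<noteq> blk q"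
          by iprover
        have pq: "{X,Y} = {blk p, blk q}" "{p,q}\<in>g" "blk p \<noteq> blk q"
          using pqc by (rule conjunct1, meson conjunct1 conjunct2, meson conjunct2)
        have "(X = blk p \<and> Y = blk q) \<or> (X = blk q \<and> Y = blk p)"
          using pq(1) by (simp add: doubleton_eq_iff)
        then have eq: "e = {snd (a (blk p)), snd (a (blk q))}"
        proof
          assume "X = blk p \<and> Y = blk q" then show ?thesis using 2(1) by simp
        next
          assume "X = blk q \<and> Y = blk p" then show ?thesis using 2(1) by (simp add: insert_commute)
        qed
        have "\<not> (p\<in>B \<and> q\<in>B)" using pq(3) blk_def by auto
        then show ?thesis using eq sae[OF pq(2)] pq(2) by simp
      qed
    qed
  qed
  have pt0: "snd (a (snd m')) = v0" using sab v0C B_def unfolding m'_def by auto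
  have prod: "(g, v0) = Gc_prod \<pi> a m'"
    unfolding Gc_prod_def using edges pt0 by simp
  have n1: "\<pi> \<noteq> {{x} |x. x \<in> U}" using Bpi Bnsing by auto
  have n2: "\<pi> \<noteq> {U}"
  proof
    assume "\<pi> = {U}"
    then have "B = U" using Bpi by simp
    then show False using wB zw by simp
  qed
  show ?thesis unfolding Gc_prime_def using P A M prod n1 n2 by blast
qed


theorem mainTheorem9:
  fixes U :: "'a set" and g :: "'a set set" and v0 :: 'a
  assumes "Gc_pt U (g, v0)"
  shows "Gc_prime U (g, v0) \<longleftrightarrow> \<not> (\<exists>c. cutpoint U g c)"
  using dirA[OF assms] dirB[OF assms] by blast

end
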